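(* Let $k<m\le kn$ be positive integers and let $I$ be an instance with $n$ agents and $m$ goods in a single category with cardinality constraint $k$, where each agent $i$ has an additive utility function $u_i:2^M\to\mathbb{R}_{\ge0}$ with $u_i(\emptyset)=0$ (not necessarily normalized). Let $\mathcal{A}^*=(A^*_1,\dots,A^*_n)$ be an allocation maximizing $\sum_i u_i(A_i)$ and let $S=\{i: |A^*_i|>k\}$. Suppose $0<u_i(M)\le 1$ for each $i\in S$ and $\sum_{i\in N\setminus S}u_i(A^*_i)\ge 1$. Then $$\frac{\text{OPT-USW}(I)}{\max_{\mathcal{A}\in \mathcal{C}_k(I)}\text{USW}(\mathcal{A})}\le \frac{1+\sum_{i\in S}u_i(A^*_i)}{1+k\sum_{i\in S}\frac{u_i(A^*_i)}{|A^*_i|}}\le \frac{1+s}{1+\frac{ks^2}{m-1}},$$ where $s=-1+\sqrt{1+\frac{m-1}{k}}$.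
   Context: An allocation is a partition $(A_1,\dots,A_n)$ of the goods $M$, agent $i$ receiving $A_i$; it is cardinal if $|A_i|\le k$ for all $i$, and $\mathcal{C}_k(I)$ denotes the set of cardinal allocations. $\text{USW}(\mathcal{A})=\sum_i u_i(A_i)$ and $\text{OPT-USW}(I)=\text{USW}(\mathcal{A}^* )$ is its maximum over all allocations. *)

theory Defs
  imports "HOL-Library.FuncSet" Complex_Main
begin

(* Agents are 0..<n, goods are M = {0..<m}; agent i values good g at v i g >= 0.
   Additive utility: u_i(A) = sum of v i g over g in A (so u_i({}) = 0). *)
definition util :: "(nat \<Rightarrow> nat \<Rightarrow> real) \<Rightarrow> nat \<Rightarrow> nat set \<Rightarrow> real" where
  "util v i A = (\<Sum>g\<in>A. v i g)"

definition is_alloc :: "nat \<Rightarrow> nat \<Rightarrow> (nat \<Rightarrow> nat set) \<Rightarrow> bool" where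
  "is_alloc n m A \<longleftrightarrow> A \<in> {..<n} \<rightarrow>\<^sub>E Pow {..<m}
     \<and> (\<Union>i<n. A i) = {..<m}
     \<and> (\<forall>i<n. \<forall>j<n. i \<noteq> j \<longrightarrow> A i \<inter> A j = {})"

definition is_cardinal_alloc :: "nat \<Rightarrow> nat \<Rightarrow> nat \<Rightarrow> (nat \<Rightarrow> nat set) \<Rightarrow> bool" where
  "is_cardinal_alloc n m k A \<longleftrightarrow> is_alloc n m A \<and> (\<forall>i<n. card (A i) \<le> k)"

definition USW :: "(nat \<Rightarrow> nat \<Rightarrow> real) \<Rightarrow> nat \<Rightarrow> (nat \<Rightarrow> nat set) \<Rightarrow> real" where
  "USW v n A = (\<Sum>i<n. util v i (A i))"

definition OPT_USW :: "(nat \<Rightarrow> nat \<Rightarrow> real) \<Rightarrow> nat \<Rightarrow> nat \<Rightarrow> real" where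
  "OPT_USW v n m = Max {USW v n A | A. is_alloc n m A}"

definition max_cardinal_USW :: "(nat \<Rightarrow> nat \<Rightarrow> real) \<Rightarrow> nat \<Rightarrow> nat \<Rightarrow> nat \<Rightarrow> real" where
  "max_cardinal_USW v n m k = Max {USW v n A | A. is_cardinal_alloc n m k A}"

end

theory Submission imports Defs begin

lemma util_mono: "finite C \<Longrightarrow> B \<subseteq> C \<Longrightarrow> (\<forall>g\<in>C. 0 \<le> v i g) \<Longrightarrow> util v i B \<le> util v i C"
  unfolding util_def by (rule sum_mono2) auto

lemma best_subset:
  fixes f :: "nat \<Rightarrow> real"
  assumes "finite A" "k \<le> card A" "0 < k"
  shows "\<exists>B\<subseteq>A. card B = k \<and> real k / real (card A) * sum f A \<le> sum f B"
  using assms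
proof (induction "card A - k" arbitrary: A)
  case 0
  then have "card A = k" by simp
  then show ?case using 0 by (intro exI[of _ A]) auto
next
  case (Suc d)
  then have ne: "A \<noteq> {}" by auto
  have "Min (f ` A) \<in> f ` A" using Min_in[of "f ` A"] Suc.prems ne by auto
  then obtain g where g: "g \<in> A" "f g = Min (f ` A)" by auto
  have gmin: "\<forall>x\<in>A. f g \<le> f x" using g Suc.prems by simp
  define A' where "A' = A - {g}"
  have cA': "card A' = card A - 1" using g Suc.prems by (simp add: A'_def)
  have ck: "card A > k" using Suc.hyps by linarith
  have "d = card A' - k" using cA' Suc.hyps by simp
  moreover have "finite A'" "k \<le> card A'" using Suc.prems cA' ck by (auto simp: A'_def)
  ultimately obtain B where B: "B \<subseteq> A'" "card B = k" "real k / real (card A') * sum f A' \<le> sum f B"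
    using Suc.hyps(1) Suc.prems(3) by blast
  have sumA: "sum f A = f g + sum f A'" using g Suc.prems by (simp add: A'_def sum.remove)
  have "real (card A) * f g \<le> sum f A"
    using sum_bounded_below[of A "f g" f] gmin by simp
  define c where "c = real (card A)"
  have c1: "c > 1" using ck Suc.prems unfolding c_def by simp
  have cA'r: "real (card A') = c - 1" using cA' ck unfolding c_def by (simp add: of_nat_diff)
  have key: "real k / c * sum f A \<le> real k / (c - 1) * sum f A'"
  proof -
    have h: "c * f g \<le> f g + sum f A'" using \<open>real (card A) * f g \<le> sum f A\<close> sumA c_def by simp
    have "(c - 1) * (f g + sum f A') \<le> c * sum f A'" using h by (simp add: algebra_simps)
    then have "(f g + sum f A') / c \<le> sum f A' / (c - 1)" using c1 by (simp add: field_simps)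
    then have "real k * ((f g + sum f A') / c) \<le> real k * (sum f A' / (c - 1))"
      by (rule mult_left_mono) simp
    then show ?thesis using sumA by (simp add: field_simps)
  qed
  show ?case using B key cA'r by (intro exI[of _ B]) (auto simp: A'_def c_def)
qed

lemma extend_alloc:
  fixes B :: "nat \<Rightarrow> nat set"
  assumes "\<forall>i<n. B i \<subseteq> {..<m} \<and> card (B i) \<le> k"
    and "\<forall>i<n. \<forall>j<n. i \<noteq> j \<longrightarrow> B i \<inter> B j = {}"
    and "m \<le> k * n"
  shows "\<exists>A. is_cardinal_alloc n m k A \<and> (\<forall>i<n. B i \<subseteq> A i)"
  using assms
proof (induction "m - card (\<Union>i<n. B i)" arbitrary: B rule: less_induct)
  case less
  have fin: "\<forall>i<n. finite (B i)" using less.prems by (meson finite_lessThan finite_subset)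
  have Usub: "(\<Union>i<n. B i) \<subseteq> {..<m}" using less.prems by auto
  have cardU: "card (\<Union>i<n. B i) = (\<Sum>i<n. card (B i))"
    using card_UN_disjoint[of "{..<n}" B] fin less.prems(2) by auto
  show ?case
  proof (cases "(\<Union>i<n. B i) = {..<m}")
    case True
    let ?A = "restrict B {..<n}"
    have "is_cardinal_alloc n m k ?A"
      unfolding is_cardinal_alloc_def is_alloc_def using True less.prems by auto
    then show ?thesis by auto
  next
    case False
    then obtain g where g: "g < m" "g \<notin> (\<Union>i<n. B i)" using Usub by auto
    have "\<exists>i<n. card (B i) < k"
    proof (rule ccontr)
      assume "\<not> ?thesis"
      then have "\<forall>i<n. card (B i) = k" using less.prems by (meson le_neq_implies_less)
      then have "card (\<Union>i<n. B i) = k * n" using cardU by simp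
      moreover have "card (\<Union>i<n. B i) < m"
        using psubset_card_mono[of "{..<m}" "\<Union>i<n. B i"] Usub False by auto
      ultimately show False using less.prems(3) by simp
    qed
    then obtain i where i: "i < n" "card (B i) < k" by auto
    define B' where "B' = B(i := insert g (B i))"
    have U': "(\<Union>j<n. B' j) = insert g (\<Union>j<n. B j)"
      using i unfolding B'_def by auto
    have "card (\<Union>j<n. B' j) = Suc (card (\<Union>j<n. B j))"
      unfolding U' using g Usub by (subst card_insert_disjoint) (auto intro: finite_subset)
    moreover have "card (\<Union>j<n. B' j) \<le> m"
      unfolding U' using g Usub by (metis card_lessThan card_mono finite_lessThan insert_subset lessThan_iff)
    ultimately have lt: "m - card (\<Union>j<n. B' j) < m - card (\<Union>j<n. B j)" by linarith
    have p1: "\<forall>j<n. B' j \<subseteq> {..<m} \<and> card (B' j) \<le> k"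
      using less.prems(1) i g fin unfolding B'_def by (auto simp: card_insert_if)
    have p2: "\<forall>j<n. \<forall>l<n. j \<noteq> l \<longrightarrow> B' j \<inter> B' l = {}"
      using less.prems(2) g i unfolding B'_def by auto
    obtain A where A: "is_cardinal_alloc n m k A" "\<forall>j<n. B' j \<subseteq> A j"
      using less.hyps[OF lt p1 p2 less.prems(3)] by blast
    have "\<forall>j<n. B j \<subseteq> A j" using A(2) unfolding B'_def by (metis fun_upd_apply subset_insertI subset_trans)
    then show ?thesis using A(1) by blast
  qed
qed

lemma fbound:
  fixes K Mm x :: real
  assumes "K > 0" "Mm > 0" "x \<ge> 0"
  shows "(1 + x) / (1 + K * x\<^sup>2 / Mm) \<le>
     (let s = -1 + sqrt (1 + Mm / K) in (1 + s) / (1 + K * s\<^sup>2 / Mm))"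
proof -
  define a where "a = K / Mm"
  define s where "s = -1 + sqrt (1 + Mm / K)"
  have a0: "a > 0" using assms by (simp add: a_def)
  have sq: "(sqrt (1 + Mm / K))\<^sup>2 = 1 + Mm / K" using assms by simp
  have s0: "s \<ge> 0" unfolding s_def using assms by simp
  have "(1 + s)\<^sup>2 = 1 + Mm / K" using sq by (simp add: s_def)
  then have id: "a * s\<^sup>2 + 2 * a * s = 1"
    using assms unfolding a_def by (simp add: field_simps power2_eq_square)
  have e1: "K * x\<^sup>2 / Mm = a * x\<^sup>2" "K * s\<^sup>2 / Mm = a * s\<^sup>2" by (simp_all add: a_def)
  have d1: "1 + a * x\<^sup>2 > 0" "1 + a * s\<^sup>2 > 0" using a0 by (auto intro: add_pos_nonneg)
  have "(1 + s) * (1 + a * x\<^sup>2) - (1 + x) * (1 + a * s\<^sup>2) = (1 + s) * a * (x - s)\<^sup>2"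
  proof -
    have h: "1 + a * s\<^sup>2 = 2 * a * s * (1 + s)" using id by (simp add: algebra_simps power2_eq_square)
    have h2: "1 - 2 * a * s = a * s\<^sup>2" using id by simp
    have "(1 + s) * (1 + a * x\<^sup>2) - (1 + x) * (1 + a * s\<^sup>2)
        = (1 + s) * ((1 - 2 * a * s) + a * x\<^sup>2 - 2 * a * s * x)"
      unfolding h by (simp add: algebra_simps)
    also have "\<dots> = (1 + s) * (a * s\<^sup>2 + a * x\<^sup>2 - 2 * a * s * x)" unfolding h2 ..
    also have "\<dots> = (1 + s) * a * (x - s)\<^sup>2" by (simp add: algebra_simps power2_eq_square)
    finally show ?thesis .
  qed
  moreover have "(1 + s) * a * (x - s)\<^sup>2 \<ge> 0" using s0 a0 by simp
  ultimately have "(1 + x) * (1 + a * s\<^sup>2) \<le> (1 + s) * (1 + a * x\<^sup>2)" by linarith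
  then have "(1 + x) / (1 + a * x\<^sup>2) \<le> (1 + s) / (1 + a * s\<^sup>2)"
    using d1 by (simp add: divide_simps)
  then show ?thesis unfolding e1 Let_def s_def[symmetric] by simp
qed

theorem lemma3:
  fixes n m k :: nat and v :: "nat \<Rightarrow> nat \<Rightarrow> real" and Aopt :: "nat \<Rightarrow> nat set"
  assumes "0 < k" and "0 < n" and "k < m" and "m \<le> k * n"
    and nonneg: "\<And>i g. i < n \<Longrightarrow> g < m \<Longrightarrow> v i g \<ge> 0"
    and opt_alloc: "is_alloc n m Aopt"
    and opt: "\<And>A. is_alloc n m A \<Longrightarrow> USW v n A \<le> USW v n Aopt"
    and S_bound: "\<And>i. i \<in> {i. i < n \<and> card (Aopt i) > k} \<Longrightarrow>
                     0 < util v i {..<m} \<and> util v i {..<m} \<le> 1"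
    and rest: "(\<Sum>i \<in> {i. i < n \<and> \<not> card (Aopt i) > k}. util v i (Aopt i)) \<ge> 1"
  shows "OPT_USW v n m / max_cardinal_USW v n m k
           \<le> (1 + (\<Sum>i \<in> {i. i < n \<and> card (Aopt i) > k}. util v i (Aopt i)))
             / (1 + real k * (\<Sum>i \<in> {i. i < n \<and> card (Aopt i) > k}.
                                  util v i (Aopt i) / real (card (Aopt i))))
       \<and> (1 + (\<Sum>i \<in> {i. i < n \<and> card (Aopt i) > k}. util v i (Aopt i)))
             / (1 + real k * (\<Sum>i \<in> {i. i < n \<and> card (Aopt i) > k}.
                                  util v i (Aopt i) / real (card (Aopt i))))
         \<le> (let s = -1 + sqrt (1 + (real m - 1) / real k)
            in (1 + s) / (1 + real k * s\<^sup>2 / (real m - 1)))"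
proof -
  define S where "S = {i. i < n \<and> card (Aopt i) > k}"
  define T where "T = {i. i < n \<and> \<not> card (Aopt i) > k}"
  define \<sigma> where "\<sigma> = (\<Sum>i\<in>S. util v i (Aopt i))"
  define \<tau> where "\<tau> = (\<Sum>i\<in>S. util v i (Aopt i) / real (card (Aopt i)))"
  define R where "R = (\<Sum>i\<in>T. util v i (Aopt i))"
  have R1: "R \<ge> 1" using rest by (simp add: R_def T_def)
  have Asub: "\<And>i. i < n \<Longrightarrow> Aopt i \<subseteq> {..<m}" using opt_alloc unfolding is_alloc_def by auto
  have Afin: "\<And>i. i < n \<Longrightarrow> finite (Aopt i)" using Asub by (meson finite_lessThan finite_subset)
  have Adisj: "\<forall>i<n. \<forall>j<n. i \<noteq> j \<longrightarrow> Aopt i \<inter> Aopt j = {}" using opt_alloc unfolding is_alloc_def by auto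
  have Snn: "\<And>i. i \<in> S \<Longrightarrow> i < n" "\<And>i. i \<in> T \<Longrightarrow> i < n" by (auto simp: S_def T_def)
  have finS: "finite S" "finite T" by (auto simp: S_def T_def)
  have ST: "{..<n} = S \<union> T" "S \<inter> T = {}" by (auto simp: S_def T_def)
  have unn: "\<And>i B. i < n \<Longrightarrow> B \<subseteq> {..<m} \<Longrightarrow> util v i B \<ge> 0"
    unfolding util_def using nonneg by (auto intro!: sum_nonneg)
  have cardS: "\<And>i. i \<in> S \<Longrightarrow> card (Aopt i) > k" by (simp add: S_def)
  have finAll: "finite {USW v n A | A. is_alloc n m A}"
  proof -
    have "{USW v n A | A. is_alloc n m A} \<subseteq> USW v n ` ({..<n} \<rightarrow>\<^sub>E Pow {..<m})"
      unfolding is_alloc_def by auto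
    moreover have "finite ({..<n} \<rightarrow>\<^sub>E Pow {..<m})" by (intro finite_PiE) auto
    ultimately show ?thesis by (meson finite_imageI finite_subset)
  qed
  have usw_split: "USW v n Aopt = R + \<sigma>"
    unfolding USW_def R_def \<sigma>_def ST(1) using sum.union_disjoint[OF finS(1) finS(2) ST(2)] by (simp add: add.commute)
  have OPT: "OPT_USW v n m = R + \<sigma>"
  proof -
    have "OPT_USW v n m = USW v n Aopt"
      unfolding OPT_USW_def
      by (rule Max_eqI[OF finAll]) (use opt opt_alloc in auto)
    then show ?thesis using usw_split by simp
  qed
  have "\<forall>i\<in>S. \<exists>B\<subseteq>Aopt i. card B = k \<and>
          real k / real (card (Aopt i)) * util v i (Aopt i) \<le> util v i B"
  proof
    fix i assume i: "i \<in> S"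
    show "\<exists>B\<subseteq>Aopt i. card B = k \<and> real k / real (card (Aopt i)) * util v i (Aopt i) \<le> util v i B"
      unfolding util_def using best_subset[of "Aopt i" k "v i"] Afin[OF Snn(1)[OF i]] cardS[OF i] assms(1)
      by auto
  qed
  from bchoice[OF this] obtain Bf where Bf0: "\<forall>i\<in>S. Bf i \<subseteq> Aopt i \<and> card (Bf i) = k \<and>
          real k / real (card (Aopt i)) * util v i (Aopt i) \<le> util v i (Bf i)"
    by blast
  then have Bf: "\<And>i. i \<in> S \<Longrightarrow> Bf i \<subseteq> Aopt i \<and> card (Bf i) = k \<and>
          real k / real (card (Aopt i)) * util v i (Aopt i) \<le> util v i (Bf i)" by blast
  define B where "B i = (if i \<in> S then Bf i else Aopt i)" for i
  have Bsub: "\<And>i. i < n \<Longrightarrow> B i \<subseteq> Aopt i" using Bf by (auto simp: B_def)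
  have Bp1: "\<forall>i<n. B i \<subseteq> {..<m} \<and> card (B i) \<le> k"
  proof (intro allI impI conjI)
    fix i assume i: "i < n"
    show "B i \<subseteq> {..<m}" using Bsub[OF i] Asub[OF i] by blast
    show "card (B i) \<le> k"
    proof (cases "i \<in> S")
      case True then show ?thesis using Bf by (simp add: B_def)
    next
      case False then show ?thesis using i by (simp add: B_def S_def)
    qed
  qed
  have Bp2: "\<forall>i<n. \<forall>j<n. i \<noteq> j \<longrightarrow> B i \<inter> B j = {}" using Adisj Bsub by blast
  obtain Ac where Ac: "is_cardinal_alloc n m k Ac" "\<forall>i<n. B i \<subseteq> Ac i"
    using extend_alloc[OF Bp1 Bp2 assms(4)] by blast
  have Acsub: "\<And>i. i < n \<Longrightarrow> Ac i \<subseteq> {..<m}" using Ac(1) unfolding is_cardinal_alloc_def is_alloc_def by auto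
  have "USW v n Ac \<ge> (\<Sum>i<n. util v i (B i))"
    unfolding USW_def
  proof (rule sum_mono)
    fix i assume "i \<in> {..<n}"
    show "util v i (B i) \<le> util v i (Ac i)"
    proof (rule util_mono)
      have i: "i < n" using \<open>i \<in> {..<n}\<close> by simp
      show "finite (Ac i)" using Acsub[OF i] finite_subset by blast
      show "B i \<subseteq> Ac i" using Ac(2) i by blast
      show "\<forall>g\<in>Ac i. 0 \<le> v i g" using Acsub[OF i] nonneg[OF i] by blast
    qed
  qed
  moreover have "(\<Sum>i<n. util v i (B i)) = (\<Sum>i\<in>S. util v i (Bf i)) + R"
  proof -
    have "(\<Sum>i<n. util v i (B i)) = (\<Sum>i\<in>S. util v i (B i)) + (\<Sum>i\<in>T. util v i (B i))"
      unfolding ST(1) by (rule sum.union_disjoint[OF finS(1) finS(2) ST(2)])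
    moreover have "(\<Sum>i\<in>S. util v i (B i)) = (\<Sum>i\<in>S. util v i (Bf i))"
      by (rule sum.cong) (auto simp: B_def)
    moreover have "(\<Sum>i\<in>T. util v i (B i)) = R"
      unfolding R_def using ST(2) by (intro sum.cong) (auto simp: B_def)
    ultimately show ?thesis by simp
  qed
  moreover have "(\<Sum>i\<in>S. util v i (Bf i)) \<ge> real k * \<tau>"
    unfolding \<tau>_def sum_distrib_left
  proof (rule sum_mono)
    fix i assume i: "i \<in> S"
    have "real k * (util v i (Aopt i) / real (card (Aopt i)))
        = real k / real (card (Aopt i)) * util v i (Aopt i)" by simp
    then show "real k * (util v i (Aopt i) / real (card (Aopt i))) \<le> util v i (Bf i)"
      using Bf[OF i] by linarith
  qed
  ultimately have UAc: "USW v n Ac \<ge> R + real k * \<tau>" by linarith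
  have finC: "finite {USW v n A | A. is_cardinal_alloc n m k A}"
    by (rule finite_subset[OF _ finAll]) (auto simp: is_cardinal_alloc_def)
  have MC: "max_cardinal_USW v n m k \<ge> R + real k * \<tau>"
  proof -
    have "USW v n Ac \<in> {USW v n A | A. is_cardinal_alloc n m k A}" using Ac(1) by blast
    then have "USW v n Ac \<le> max_cardinal_USW v n m k"
      unfolding max_cardinal_USW_def by (rule Max_ge[OF finC])
    then show ?thesis using UAc by linarith
  qed
  have uS: "\<And>i. i \<in> S \<Longrightarrow> 0 \<le> util v i (Aopt i) \<and> util v i (Aopt i) \<le> 1"
  proof -
    fix i assume i: "i \<in> S"
    have iN: "i < n" using Snn(1)[OF i] .
    have "util v i (Aopt i) \<le> util v i {..<m}"
      using Asub[OF iN] nonneg[OF iN] by (intro util_mono) auto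
    moreover have "util v i {..<m} \<le> 1" using S_bound[of i] i by (simp add: S_def)
    moreover have "0 \<le> util v i (Aopt i)" using unn[OF iN Asub[OF iN]] .
    ultimately show "0 \<le> util v i (Aopt i) \<and> util v i (Aopt i) \<le> 1" by linarith
  qed
  have \<sigma>0: "\<sigma> \<ge> 0" unfolding \<sigma>_def using uS by (auto intro: sum_nonneg)
  have \<tau>0: "\<tau> \<ge> 0" unfolding \<tau>_def using uS by (auto intro: sum_nonneg)
  have k\<tau>: "real k * \<tau> \<le> \<sigma>"
    unfolding \<tau>_def \<sigma>_def sum_distrib_left
  proof (rule sum_mono)
    fix i assume i: "i \<in> S"
    have c: "real (card (Aopt i)) > real k" using cardS[OF i] by simp
    then have "real k / real (card (Aopt i)) \<le> 1" by simp
    then have "real k / real (card (Aopt i)) * util v i (Aopt i) \<le> 1 * util v i (Aopt i)"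
      using uS[OF i] by (intro mult_right_mono) auto
    then show "real k * (util v i (Aopt i) / real (card (Aopt i))) \<le> util v i (Aopt i)" by simp
  qed
  have MCpos: "max_cardinal_USW v n m k > 0" using MC R1 \<tau>0 proof -
    have "real k * \<tau> \<ge> 0" using \<tau>0 by simp
    then show ?thesis using MC R1 by linarith
  qed
  have part1a: "OPT_USW v n m / max_cardinal_USW v n m k \<le> (R + \<sigma>) / (R + real k * \<tau>)"
  proof -
    have kt: "real k * \<tau> \<ge> 0" using \<tau>0 by simp
    then have p: "R + real k * \<tau> > 0" using R1 by linarith
    show ?thesis unfolding OPT using MC MCpos p \<sigma>0 R1
      by (intro divide_left_mono) (simp_all add: mult_pos_pos)
  qed
  have part1b: "(R + \<sigma>) / (R + real k * \<tau>) \<le> (1 + \<sigma>) / (1 + real k * \<tau>)"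
  proof -
    have "(R - 1) * (real k * \<tau>) \<le> (R - 1) * \<sigma>" using R1 k\<tau> by (intro mult_left_mono) auto
    then have "(R + \<sigma>) * (1 + real k * \<tau>) \<le> (1 + \<sigma>) * (R + real k * \<tau>)"
      by (simp add: algebra_simps)
    moreover have "R + real k * \<tau> > 0" "1 + real k * \<tau> > 0" using R1 \<tau>0 by (auto intro: add_pos_nonneg)
    ultimately show ?thesis by (simp add: divide_simps)
  qed
  have m1: "real m - 1 > 0" using assms(1,3) by simp
  have sumc: "(\<Sum>i\<in>S. real (card (Aopt i))) \<le> real m - 1"
  proof -
    have cu: "card (\<Union>i\<in>S. Aopt i) = (\<Sum>i\<in>S. card (Aopt i))"
    proof (rule card_UN_disjoint[OF finS(1)])
      show "\<forall>i\<in>S. finite (Aopt i)" using Afin Snn by blast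
      show "\<forall>i\<in>S. \<forall>j\<in>S. i \<noteq> j \<longrightarrow> Aopt i \<inter> Aopt j = {}" using Adisj Snn by blast
    qed
    have "R \<noteq> 0" using R1 by simp
    have "\<exists>j\<in>T. util v j (Aopt j) \<noteq> 0"
    proof (rule ccontr)
      assume "\<not> ?thesis"
      then have "R = 0" unfolding R_def by simp
      then show False using R1 by simp
    qed
    then obtain j where j: "j \<in> T" "util v j (Aopt j) \<noteq> 0" by blast
    then have "Aopt j \<noteq> {}" by (auto simp: util_def)
    then obtain g where g: "g \<in> Aopt j" by auto
    have "g \<notin> (\<Union>i\<in>S. Aopt i)" using Adisj g j ST(2) Snn by blast
    moreover have "g < m" using Asub Snn j g by auto
    ultimately have "(\<Union>i\<in>S. Aopt i) \<subseteq> {..<m} - {g}" using Asub Snn by auto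
    then have "card (\<Union>i\<in>S. Aopt i) \<le> card ({..<m} - {g})" by (intro card_mono) auto
    then have "card (\<Union>i\<in>S. Aopt i) \<le> m - 1" using \<open>g < m\<close> by simp
    then have "(\<Sum>i\<in>S. card (Aopt i)) \<le> m - 1" using cu by simp
    then have "real (\<Sum>i\<in>S. card (Aopt i)) \<le> real (m - 1)" by linarith
    then show ?thesis using assms(3) by (simp add: of_nat_diff)
  qed
  have \<tau>low: "\<sigma>\<^sup>2 / (real m - 1) \<le> \<tau>"
  proof -
    define l where "l = \<sigma> / (real m - 1)"
    have l0: "l \<ge> 0" using \<sigma>0 m1 by (simp add: l_def)
    have tm: "2 * l * util v i (Aopt i) - l\<^sup>2 * real (card (Aopt i))
        \<le> util v i (Aopt i) / real (card (Aopt i))" if i: "i \<in> S" for i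
    proof -
      define u where "u = util v i (Aopt i)"
      define c where "c = real (card (Aopt i))"
      have c0: "c > 0" using cardS[OF i] unfolding c_def by simp
      have u01: "0 \<le> u" "u \<le> 1" using uS[OF i] by (auto simp: u_def)
      have "2 * l * u - l\<^sup>2 * c \<le> 2 * l * u - l\<^sup>2 * c * u"
        using u01 l0 c0 by (simp add: mult_left_le)
      also have "\<dots> \<le> u / c"
      proof -
        have "0 \<le> u * (1 - l * c)\<^sup>2" using u01 by simp
        then have "(2 * l * u - l\<^sup>2 * c * u) * c \<le> u" by (simp add: algebra_simps power2_eq_square)
        then show ?thesis using c0 by (simp add: field_simps)
      qed
      finally show ?thesis by (simp add: u_def c_def)
    qed
    have "(\<Sum>i\<in>S. 2 * l * util v i (Aopt i) - l\<^sup>2 * real (card (Aopt i))) \<le> \<tau>"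
      unfolding \<tau>_def using tm by (rule sum_mono)
    moreover have "(\<Sum>i\<in>S. 2 * l * util v i (Aopt i) - l\<^sup>2 * real (card (Aopt i)))
        = 2 * l * \<sigma> - l\<^sup>2 * (\<Sum>i\<in>S. real (card (Aopt i)))"
      by (simp add: sum_subtractf sum_distrib_left \<sigma>_def)
    moreover have "l\<^sup>2 * (\<Sum>i\<in>S. real (card (Aopt i))) \<le> l\<^sup>2 * (real m - 1)"
      using sumc by (intro mult_left_mono) auto
    moreover have "2 * l * \<sigma> - l\<^sup>2 * (real m - 1) = \<sigma>\<^sup>2 / (real m - 1)"
    proof -
      have gen: "\<And>M::real. M > 0 \<Longrightarrow> 2 * (\<sigma> / M) * \<sigma> - (\<sigma> / M)\<^sup>2 * M = \<sigma>\<^sup>2 / M"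
        by (simp add: field_simps power2_eq_square)
      show ?thesis unfolding l_def by (rule gen[OF m1])
    qed
    ultimately show ?thesis by linarith
  qed
  have part2a: "(1 + \<sigma>) / (1 + real k * \<tau>) \<le> (1 + \<sigma>) / (1 + real k * \<sigma>\<^sup>2 / (real m - 1))"
  proof (rule divide_left_mono)
    show "0 \<le> 1 + \<sigma>" using \<sigma>0 by simp
    have "real k * (\<sigma>\<^sup>2 / (real m - 1)) \<le> real k * \<tau>" using \<tau>low by (intro mult_left_mono) auto
    then show "1 + real k * \<sigma>\<^sup>2 / (real m - 1) \<le> 1 + real k * \<tau>" by simp
    have "real k * \<sigma>\<^sup>2 / (real m - 1) \<ge> 0" using m1 by simp
    then show "0 < (1 + real k * \<tau>) * (1 + real k * \<sigma>\<^sup>2 / (real m - 1))"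
      using \<tau>0 by (intro mult_pos_pos) (auto intro: add_pos_nonneg)
  qed
  have part2b: "(1 + \<sigma>) / (1 + real k * \<sigma>\<^sup>2 / (real m - 1))
      \<le> (let s = -1 + sqrt (1 + (real m - 1) / real k) in (1 + s) / (1 + real k * s\<^sup>2 / (real m - 1)))"
    using fbound[of "real k" "real m - 1" \<sigma>] assms(1) m1 \<sigma>0 by simp
  show ?thesis
    using part1a part1b part2a part2b unfolding S_def[symmetric] \<sigma>_def[symmetric] \<tau>_def[symmetric]
    by linarith
qed

end
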